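(* Let $z$ be a positive integer and let $C$ and $D$ be quasi-cyclic LDPC codes with circulant matrices of size $z$, given by model matrices $\mathcal{H}_C$ and $\mathcal{H}_D$ (each with $L$ columns, all entries in $\{0,1,\dots,z-1\}\cup\{\infty\}$). Let $y$ be a positive integer dividing $z$. Let $C'$ (resp. $D'$) be the quasi-cyclic LDPC code with the same model matrix as $C$ (resp. $D$) but with circulant matrices of size $y$, where each finite shift $p$ is interpreted modulo $y$ (i.e. replaced by the $y\times y$ matrix $I_y(1)^{p}$). If $C$ and $D$ satisfy the twisted condition $D^{\perp}\subset C$, then $C'$ and $D'$ satisfy the twisted condition $D'^{\perp}\subset C'$.
   Context: All codes are binary linear codes over $\mathbb{F}_2$. For a linear code $D\subseteq\mathbb{F}_2^n$, its dual is $D^{\perp}=\{d'\in\mathbb{F}_2^n : d\,d'^{T}=0 \text{ for all } d\in D\}$. A pair of codes $C,D$ of the same length satisfies the twisted condition if $D^{\perp}\subset C$; if $H_C,H_D$ are parity-check matrices of $C,D$ (i.e. $C=\{x: H_Cx^T=0\}$, $D=\{x:H_Dx^T=0\}$), this is equivalent to $H_C H_D^{T}=0$. For a positive integer $z$, let $I_z(1)$ be the $z\times z$ circulant permutation matrix of a single circular right shift (entries $1$ at positions $(i,i+1)$ for $i<z$ and $(z,1)$, zero elsewhere), and $I_z(b)=I_z(1)^b$. A quasi-cyclic LDPC code with circulant matrices of size $z$ is specified by a model matrix $\mathcal{H}=(p(i,j))$ of size $J\times L$ with entries in $\{0,1,\dots,z-1\}\cup\{\infty\}$; its parity-check matrix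 $H$ is the $zJ\times zL$ binary matrix obtained by replacing each entry $p(i,j)\neq\infty$ by $I_z(p(i,j))$ and each $\infty$ by the $z\times z$ zero matrix, and the code is $\{x\in\mathbb{F}_2^{zL}: Hx^T=0\}$. The base matrix of the code is the $J\times L$ binary matrix with entry $1$ where $p(i,j)\neq\infty$ and $0$ where $p(i,j)=\infty$. *)

theory Defs
  imports Main "HOL-Library.Z2"
begin

text \<open>Binary vectors of length n are functions nat => bit vanishing outside {..<n}
  (positions 0..n-1). Matrices are functions nat => nat => bit with explicit sizes.
  A model matrix is p :: nat => nat => nat option, where None encodes infinity.\<close>

definition vec_len :: "nat \<Rightarrow> (nat \<Rightarrow> bit) \<Rightarrow> bool" where
  "vec_len n x \<longleftrightarrow> (\<forall>j\<ge>n. x j = 0)"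

definition dual_code :: "nat \<Rightarrow> (nat \<Rightarrow> bit) set \<Rightarrow> (nat \<Rightarrow> bit) set" where
  "dual_code n D = {x. vec_len n x \<and> (\<forall>d\<in>D. (\<Sum>j<n. d j * x j) = 0)}"

definition twisted :: "nat \<Rightarrow> (nat \<Rightarrow> bit) set \<Rightarrow> (nat \<Rightarrow> bit) set \<Rightarrow> bool" where
  "twisted n C D \<longleftrightarrow> dual_code n D \<subseteq> C"

text \<open>I_z(b) = I_z(1)^b, 0-indexed: entry (i,j) is 1 iff j = (i + b) mod z.\<close>
definition circ :: "nat \<Rightarrow> nat \<Rightarrow> nat \<Rightarrow> nat \<Rightarrow> bit" where
  "circ z b i j = (if j = (i + b) mod z then 1 else 0)"

definition model_matrix :: "nat \<Rightarrow> nat \<Rightarrow> nat \<Rightarrow> (nat \<Rightarrow> nat \<Rightarrow> nat option) \<Rightarrow> bool" where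
  "model_matrix z J L p \<longleftrightarrow> (\<forall>i<J. \<forall>j<L. \<forall>b. p i j = Some b \<longrightarrow> b < z)"

definition qc_H :: "nat \<Rightarrow> (nat \<Rightarrow> nat \<Rightarrow> nat option) \<Rightarrow> nat \<Rightarrow> nat \<Rightarrow> bit" where
  "qc_H z p i j = (case p (i div z) (j div z) of None \<Rightarrow> 0
                    | Some b \<Rightarrow> circ z b (i mod z) (j mod z))"

definition qc_code :: "nat \<Rightarrow> nat \<Rightarrow> nat \<Rightarrow> (nat \<Rightarrow> nat \<Rightarrow> nat option) \<Rightarrow> (nat \<Rightarrow> bit) set" where
  "qc_code z J L p = {x. vec_len (z * L) x \<and>
      (\<forall>i < z * J. (\<Sum>j < z * L. qc_H z p i j * x j) = 0)}"

end

theory Submission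
  imports Defs
begin

lemma sum_split_blocks:
  fixes f :: "nat \<Rightarrow> 'a::comm_monoid_add"
  shows "(\<Sum>m<z*L. f m) = (\<Sum>a<L. \<Sum>t<z. f (a*z+t))"
proof (induction L)
  case 0 then show ?case by simp
next
  case (Suc L)
  have "{..<z*Suc L} = {..<z*L} \<union> {z*L..<z*L+z}" by auto
  then have "(\<Sum>m<z*Suc L. f m) = (\<Sum>m<z*L. f m) + (\<Sum>m\<in>{z*L..<z*L+z}. f m)"
    by (metis (no_types) sum.union_disjoint finite_lessThan finite_atLeastLessThan Int_emptyI atLeastLessThan_iff lessThan_iff not_le)
  also have "(\<Sum>m\<in>{z*L..<z*L+z}. f m) = (\<Sum>t<z. f (L*z+t))"
  proof -
    have "(\<Sum>m\<in>{z*L..<z*L+z}. f m) = (\<Sum>t\<in>{0..<z}. f (t + z*L))"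
      using sum.shift_bounds_nat_ivl[of f 0 "z*L" z] by (simp add: add.commute)
    then show ?thesis by (simp add: lessThan_atLeast0 mult.commute add.commute)
  qed
  finally show ?case using Suc by simp
qed

lemma row_eq:
  assumes "0 < z"
  shows "(\<Sum>j<z*L. qc_H z p i j * x j) =
    (\<Sum>a<L. (case p (i div z) a of None \<Rightarrow> 0 | Some b \<Rightarrow> x (a*z + (i mod z + b) mod z)))"
proof -
  have "(\<Sum>j<z*L. qc_H z p i j * x j) = (\<Sum>a<L. \<Sum>t<z. qc_H z p i (a*z+t) * x (a*z+t))"
    by (rule sum_split_blocks)
  also have "\<dots> = (\<Sum>a<L. (case p (i div z) a of None \<Rightarrow> 0 | Some b \<Rightarrow> x (a*z + (i mod z + b) mod z)))"
  proof (rule sum.cong[OF refl])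
    fix a assume "a \<in> {..<L}"
    have dm: "\<And>t. t < z \<Longrightarrow> (a*z+t) div z = a \<and> (a*z+t) mod z = t" using assms by auto
    show "(\<Sum>t<z. qc_H z p i (a*z+t) * x (a*z+t)) =
      (case p (i div z) a of None \<Rightarrow> 0 | Some b \<Rightarrow> x (a*z + (i mod z + b) mod z))"
    proof (cases "p (i div z) a")
      case None
      then show ?thesis using dm by (simp add: qc_H_def)
    next
      case (Some b)
      have "(\<Sum>t<z. qc_H z p i (a*z+t) * x (a*z+t)) =
            (\<Sum>t<z. if t = (i mod z + b) mod z then x (a*z+t) else 0)"
        by (rule sum.cong[OF refl]) (use dm Some in \<open>auto simp: qc_H_def circ_def\<close>)
      also have "\<dots> = x (a*z + (i mod z + b) mod z)"
        using assms by (simp add: sum.delta')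
      finally show ?thesis using Some by simp
    qed
  qed
  finally show ?thesis .
qed

lemma mod_add_cancel_y:
  fixes r r' b y :: nat
  assumes "(r' + b) mod y = (r + b) mod y"
  shows "r' mod y = r mod y"
proof -
  have "int r' mod int y = int r mod int y"
  proof -
    have "(int r' + int b) mod int y = (int r + int b) mod int y"
      using assms by (metis of_nat_add zmod_int)
    then have "((int r' + int b) - int b) mod int y = ((int r + int b) - int b) mod int y"
      by (metis mod_diff_left_eq)
    then show ?thesis by simp
  qed
  then show ?thesis by (metis of_nat_eq_iff zmod_int)
qed

lemma bij_shift:
  fixes z b :: nat
  assumes "0 < z"
  shows "bij_betw (\<lambda>r. (r + b) mod z) {..<z} {..<z}"
proof -
  have inj: "inj_on (\<lambda>r. (r + b) mod z) {..<z}"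
  proof (rule inj_onI)
    fix r1 r2 :: nat assume "r1 \<in> {..<z}" "r2 \<in> {..<z}" "(r1 + b) mod z = (r2 + b) mod z"
    then show "r1 = r2" using mod_add_cancel_y[of r1 b z r2] by simp
  qed
  moreover have "(\<lambda>r. (r + b) mod z) ` {..<z} \<subseteq> {..<z}" using assms by auto
  ultimately show ?thesis
    by (simp add: bij_betw_def endo_inj_surj)
qed


lemma dot_eq:
  fixes z y L :: nat and d x :: "nat \<Rightarrow> bit"
  assumes "0 < z" "0 < y" "y dvd z"
  shows "(\<Sum>m<z*L. d m * (if m < z*L then x ((m div z)*y + (m mod z) mod y) else 0)) =
         (\<Sum>m<y*L. (if m < y*L then (\<Sum>t\<in>{t\<in>{..<z}. t mod y = m mod y}. d ((m div y)*z + t)) else 0) * x m)"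
proof -
  have lhs: "(\<Sum>m<z*L. d m * (if m < z*L then x ((m div z)*y + (m mod z) mod y) else 0))
      = (\<Sum>a<L. \<Sum>t<z. d (a*z+t) * x (a*y + t mod y))"
  proof -
    have "(\<Sum>m<z*L. d m * (if m < z*L then x ((m div z)*y + (m mod z) mod y) else 0))
       = (\<Sum>m<z*L. d m * x ((m div z)*y + (m mod z) mod y))" by (rule sum.cong) auto
    also have "\<dots> = (\<Sum>a<L. \<Sum>t<z. d (a*z+t) * x (((a*z+t) div z)*y + ((a*z+t) mod z) mod y))"
      by (rule sum_split_blocks)
    also have "\<dots> = (\<Sum>a<L. \<Sum>t<z. d (a*z+t) * x (a*y + t mod y))"
      using assms by (intro sum.cong refl) auto
    finally show ?thesis .
  qed
  have rhs: "(\<Sum>m<y*L. (if m < y*L then (\<Sum>t\<in>{t\<in>{..<z}. t mod y = m mod y}. d ((m div y)*z + t)) else 0) * x m)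
      = (\<Sum>a<L. \<Sum>t<z. d (a*z+t) * x (a*y + t mod y))"
  proof -
    have "(\<Sum>m<y*L. (if m < y*L then (\<Sum>t\<in>{t\<in>{..<z}. t mod y = m mod y}. d ((m div y)*z + t)) else 0) * x m)
       = (\<Sum>m<y*L. (\<Sum>t\<in>{t\<in>{..<z}. t mod y = m mod y}. d ((m div y)*z + t)) * x m)"
      by (rule sum.cong) auto
    also have "\<dots> = (\<Sum>a<L. \<Sum>k<y. (\<Sum>t\<in>{t\<in>{..<z}. t mod y = ((a*y+k) mod y)}. d (((a*y+k) div y)*z + t)) * x (a*y+k))"
      by (rule sum_split_blocks)
    also have "\<dots> = (\<Sum>a<L. \<Sum>k<y. \<Sum>t\<in>{t\<in>{..<z}. t mod y = k}. d (a*z + t) * x (a*y + t mod y))"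
    proof (intro sum.cong refl)
      fix a k assume "k \<in> {..<y}"
      then have k: "k < y" by simp
      have e1: "(a*y+k) mod y = k" "(a*y+k) div y = a" using k by auto
      have "(\<Sum>t\<in>{t\<in>{..<z}. t mod y = ((a*y+k) mod y)}. d (((a*y+k) div y)*z + t)) * x (a*y+k)
          = (\<Sum>t\<in>{t\<in>{..<z}. t mod y = k}. d (a*z + t) * x (a*y+k))"
        unfolding e1 by (rule sum_distrib_right)
      also have "\<dots> = (\<Sum>t\<in>{t\<in>{..<z}. t mod y = k}. d (a*z + t) * x (a*y + t mod y))"
        by (rule sum.cong) auto
      finally show "(\<Sum>t\<in>{t\<in>{..<z}. t mod y = ((a*y+k) mod y)}. d (((a*y+k) div y)*z + t)) * x (a*y+k)
          = (\<Sum>t\<in>{t\<in>{..<z}. t mod y = k}. d (a*z + t) * x (a*y + t mod y))" .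
    qed
    also have "\<dots> = (\<Sum>a<L. \<Sum>t<z. d (a*z+t) * x (a*y + t mod y))"
    proof (rule sum.cong[OF refl])
      fix a
      show "(\<Sum>k<y. \<Sum>t\<in>{t\<in>{..<z}. t mod y = k}. d (a*z + t) * x (a*y + t mod y)) = (\<Sum>t<z. d (a*z+t) * x (a*y + t mod y))"
        by (rule sum.group) (use assms in auto)
    qed
    finally show ?thesis .
  qed
  show ?thesis using lhs rhs by simp
qed


lemma shift_sum:
  fixes z y r b :: nat and f :: "nat \<Rightarrow> 'a::comm_monoid_add"
  assumes "0 < z" "0 < y" "y dvd z" "r < y"
  shows "(\<Sum>r'\<in>{r'\<in>{..<z}. r' mod y = r}. f ((r'+b) mod z)) =
         (\<Sum>t\<in>{t\<in>{..<z}. t mod y = (r+b) mod y}. f t)"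
proof -
  define g where "g t = (if t mod y = (r+b) mod y then f t else 0)" for t
  have "(\<Sum>r'\<in>{r'\<in>{..<z}. r' mod y = r}. f ((r'+b) mod z))
      = (\<Sum>r'<z. if r' mod y = r then f ((r'+b) mod z) else 0)"
    by (rule sum.inter_filter) simp
  also have "\<dots> = (\<Sum>r'<z. g ((r'+b) mod z))"
  proof (rule sum.cong[OF refl])
    fix r' :: nat
    have "((r'+b) mod z) mod y = (r'+b) mod y" using assms(3) by (simp add: mod_mod_cancel)
    moreover have "(r'+b) mod y = (r+b) mod y \<longleftrightarrow> r' mod y = r"
    proof
      assume "(r'+b) mod y = (r+b) mod y"
      then show "r' mod y = r" using mod_add_cancel_y[of r' b y r] assms(4) by simp
    next
      assume "r' mod y = r"
      then show "(r'+b) mod y = (r+b) mod y" by (metis mod_add_left_eq)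
    qed
    ultimately show "(if r' mod y = r then f ((r'+b) mod z) else 0) = g ((r'+b) mod z)"
      unfolding g_def by simp
  qed
  also have "\<dots> = (\<Sum>t<z. g t)"
    by (rule sum.reindex_bij_betw[OF bij_shift[OF assms(1)]])
  also have "\<dots> = (\<Sum>t\<in>{t\<in>{..<z}. t mod y = (r+b) mod y}. f t)"
    unfolding g_def by (rule sum.inter_filter[symmetric]) simp
  finally show ?thesis .
qed

lemma fold_mem:
  fixes z y J L :: nat and p :: "nat \<Rightarrow> nat \<Rightarrow> nat option" and d :: "nat \<Rightarrow> bit"
  assumes "0 < z" "0 < y" "y dvd z" and dC: "d \<in> qc_code z J L p"
  shows "(\<lambda>m. if m < y*L then (\<Sum>t\<in>{t\<in>{..<z}. t mod y = m mod y}. d ((m div y)*z + t)) else 0)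
         \<in> qc_code y J L p" (is "?F \<in> _")
proof -
  have yz: "y \<le> z" using assms by (simp add: dvd_imp_le)
  have rowz: "\<And>i. i < z*J \<Longrightarrow> (\<Sum>j<z*L. qc_H z p i j * d j) = 0"
    using dC by (simp add: qc_code_def)
  have Fv: "\<And>a c. a < L \<Longrightarrow> c < y \<Longrightarrow> ?F (a*y + c) = (\<Sum>t\<in>{t\<in>{..<z}. t mod y = c}. d (a*z + t))"
  proof -
    fix a c assume a: "a < L" and c: "c < y"
    have "a*y + c < y*L"
    proof -
      have "a*y + c < a*y + y" using c by simp
      also have "\<dots> = (a+1)*y" by simp
      also have "\<dots> \<le> L*y" using a by (intro mult_right_mono) auto
      finally show ?thesis by (simp add: mult.commute)
    qed
    then show "?F (a*y + c) = (\<Sum>t\<in>{t\<in>{..<z}. t mod y = c}. d (a*z + t))" using c by simp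
  qed
  have "vec_len (y*L) ?F" by (simp add: vec_len_def)
  moreover have "\<forall>i < y*J. (\<Sum>j < y*L. qc_H y p i j * ?F j) = 0"
  proof (intro allI impI)
    fix i assume i: "i < y*J"
    define q r where "q = i div y" and "r = i mod y"
    have r: "r < y" using assms by (simp add: r_def)
    have q: "q < J" using i assms by (simp add: q_def less_mult_imp_div_less mult.commute)
    define S where "S = {r'\<in>{..<z}. r' mod y = r}"
    have "(\<Sum>j < y*L. qc_H y p i j * ?F j)
        = (\<Sum>a<L. (case p q a of None \<Rightarrow> 0 | Some b \<Rightarrow> ?F (a*y + (r + b) mod y)))"
      unfolding q_def r_def by (rule row_eq[OF assms(2)])
    also have "\<dots> = (\<Sum>a<L. \<Sum>r'\<in>S. (case p q a of None \<Rightarrow> 0 | Some b \<Rightarrow> d (a*z + (r' + b) mod z)))"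
    proof (rule sum.cong[OF refl])
      fix a assume "a \<in> {..<L}"
      then have a: "a < L" by simp
      show "(case p q a of None \<Rightarrow> 0 | Some b \<Rightarrow> ?F (a*y + (r + b) mod y))
          = (\<Sum>r'\<in>S. (case p q a of None \<Rightarrow> 0 | Some b \<Rightarrow> d (a*z + (r' + b) mod z)))"
      proof (cases "p q a")
        case None then show ?thesis by simp
      next
        case (Some b)
        have "?F (a*y + (r + b) mod y) = (\<Sum>t\<in>{t\<in>{..<z}. t mod y = (r+b) mod y}. d (a*z + t))"
          using Fv[OF a] assms(2) by simp
        also have "\<dots> = (\<Sum>r'\<in>S. d (a*z + (r' + b) mod z))"
          unfolding S_def using shift_sum[OF assms(1,2,3) r, of "\<lambda>t. d (a*z+t)" b] by simp
        finally show ?thesis using Some by simp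
      qed
    qed
    also have "\<dots> = (\<Sum>r'\<in>S. \<Sum>a<L. (case p q a of None \<Rightarrow> 0 | Some b \<Rightarrow> d (a*z + (r' + b) mod z)))"
      by (rule sum.swap)
    also have "\<dots> = (\<Sum>r'\<in>S. (\<Sum>j<z*L. qc_H z p (q*z + r') j * d j))"
    proof (rule sum.cong[OF refl])
      fix r' assume "r' \<in> S"
      then have r': "r' < z" by (simp add: S_def)
      have e: "(q*z + r') div z = q" "(q*z + r') mod z = r'" using r' by auto
      show "(\<Sum>a<L. (case p q a of None \<Rightarrow> 0 | Some b \<Rightarrow> d (a*z + (r' + b) mod z)))
          = (\<Sum>j<z*L. qc_H z p (q*z + r') j * d j)"
        using row_eq[OF assms(1), where L=L and p=p and i="q*z+r'" and x=d] unfolding e by simp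
    qed
    also have "\<dots> = 0"
    proof (rule sum.neutral, intro ballI)
      fix r' assume "r' \<in> S"
      then have r': "r' < z" by (simp add: S_def)
      have "q*z + r' < q*z + z" using r' by simp
      also have "\<dots> = (q+1)*z" by simp
      also have "\<dots> \<le> J*z" using q by (intro mult_right_mono) auto
      finally show "(\<Sum>j<z*L. qc_H z p (q*z + r') j * d j) = 0"
        using rowz by (simp add: mult.commute)
    qed
    finally show "(\<Sum>j < y*L. qc_H y p i j * ?F j) = 0" .
  qed
  ultimately show ?thesis unfolding qc_code_def mem_Collect_eq by blast
qed


theorem mainTheorem1:
  fixes z y JC JD L :: nat and pC pD :: "nat \<Rightarrow> nat \<Rightarrow> nat option"
  assumes "0 < z" and "0 < y" and "y dvd z"
    and "model_matrix z JC L pC" and "model_matrix z JD L pD"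
    and "twisted (z * L) (qc_code z JC L pC) (qc_code z JD L pD)"
  shows "twisted (y * L) (qc_code y JC L pC) (qc_code y JD L pD)"
  unfolding twisted_def
proof
  fix x assume xD: "x \<in> dual_code (y * L) (qc_code y JD L pD)"
  have yz: "y \<le> z" using assms by (simp add: dvd_imp_le)
  define X where "X m = (if m < z*L then x ((m div z)*y + (m mod z) mod y) else 0)" for m
  have XD: "X \<in> dual_code (z*L) (qc_code z JD L pD)"
    unfolding dual_code_def mem_Collect_eq
  proof (intro conjI ballI)
    show "vec_len (z*L) X" by (simp add: vec_len_def X_def)
  next
    fix d assume d: "d \<in> qc_code z JD L pD"
    have "(\<Sum>j<z*L. d j * X j) = (\<Sum>m<y*L. (if m < y*L then (\<Sum>t\<in>{t\<in>{..<z}. t mod y = m mod y}. d ((m div y)*z + t)) else 0) * x m)"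
      unfolding X_def by (rule dot_eq[OF assms(1,2,3)])
    also have "\<dots> = 0"
    proof -
      have h: "\<forall>d\<in>qc_code y JD L pD. (\<Sum>j<y*L. d j * x j) = 0"
        using xD unfolding dual_code_def by blast
      show ?thesis using h[rule_format, OF fold_mem[OF assms(1,2,3) d]] by (simp only:)
    qed
    finally show "(\<Sum>j<z*L. d j * X j) = 0" .
  qed
  then have XC: "X \<in> qc_code z JC L pC" using assms(6) by (auto simp: twisted_def)
  have "vec_len (y*L) x" using xD by (simp add: dual_code_def)
  moreover have "\<forall>i < y*JC. (\<Sum>j < y*L. qc_H y pC i j * x j) = 0"
  proof (intro allI impI)
    fix i assume i: "i < y*JC"
    define q r where "q = i div y" and "r = i mod y"
    have r: "r < y" using assms by (simp add: r_def)
    have q: "q < JC" using i assms by (simp add: q_def less_mult_imp_div_less mult.commute)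
    have rz: "r < z" using r yz by simp
    have iz: "q*z + r < z*JC"
    proof -
      have "q*z + r < q*z + z" using rz by simp
      also have "\<dots> = (q+1)*z" by simp
      also have "\<dots> \<le> JC*z" using q by (intro mult_right_mono) auto
      finally show ?thesis by (simp add: mult.commute)
    qed
    have e: "(q*z + r) div z = q" "(q*z + r) mod z = r" using rz by auto
    have "(\<Sum>j < y*L. qc_H y pC i j * x j)
        = (\<Sum>a<L. (case pC q a of None \<Rightarrow> 0 | Some b \<Rightarrow> x (a*y + (r + b) mod y)))"
      unfolding q_def r_def by (rule row_eq[OF assms(2)])
    also have "\<dots> = (\<Sum>a<L. (case pC q a of None \<Rightarrow> 0 | Some b \<Rightarrow> X (a*z + (r + b) mod z)))"
    proof (rule sum.cong[OF refl])
      fix a assume "a \<in> {..<L}"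
      then have a: "a < L" by simp
      show "(case pC q a of None \<Rightarrow> 0 | Some b \<Rightarrow> x (a*y + (r + b) mod y))
          = (case pC q a of None \<Rightarrow> 0 | Some b \<Rightarrow> X (a*z + (r + b) mod z))"
      proof (cases "pC q a")
        case None then show ?thesis by simp
      next
        case (Some b)
        define c where "c = (r + b) mod z"
        have c: "c < z" using assms(1) by (simp add: c_def)
        have lt: "a*z + c < z*L"
        proof -
          have "a*z + c < a*z + z" using c by simp
          also have "\<dots> = (a+1)*z" by simp
          also have "\<dots> \<le> L*z" using a by (intro mult_right_mono) auto
          finally show ?thesis by (simp add: mult.commute)
        qed
        have "X (a*z + c) = x (a*y + c mod y)"
          using lt c by (simp add: X_def)
        moreover have "c mod y = (r + b) mod y" using assms(3) by (simp add: c_def mod_mod_cancel)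
        ultimately show ?thesis using Some by (simp add: c_def)
      qed
    qed
    also have "\<dots> = (\<Sum>j<z*L. qc_H z pC (q*z + r) j * X j)"
      using row_eq[OF assms(1), where L=L and p=pC and i="q*z+r" and x=X] unfolding e by simp
    also have "\<dots> = 0" using XC iz by (simp add: qc_code_def)
    finally show "(\<Sum>j < y*L. qc_H y pC i j * x j) = 0" .
  qed
  ultimately show "x \<in> qc_code y JC L pC" unfolding qc_code_def mem_Collect_eq by blast
qed

end
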